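(* Let $B$ be an integral domain containing $A$ as a subring, let $f:A\to B$ be $\mathbb{F}_q$-linear, and let $d\ge1$. Then in $\mathrm{Frac}(B)[z]$, $$(-1)^{d+1}\frac{L_{d+1}}{D_{d+1}}P_{d+1}(f)(z)-\alpha_{d+1,d}(f)\,e_d(z)=(-1)^d\frac{L_d}{D_d}P_d(f)(z).$$
   Context: $q$ is a power of a prime, $A=\mathbb{F}_q[\theta]$, $A_+(d)$ the monic polynomials of degree $d$, $A(d)$ the polynomials of degree $<d$ ($A(0)=\{0\}$). $D_d$ is the product of all monic polynomials of degree $d$, $L_d$ the lcm of all polynomials of degree $d$, $D_0=L_0=1$. $e_i(z):=\prod_{a\in A(i)}(z-a)$, a monic $\mathbb{F}_q$-linear polynomial of degree $q^i$. For $f:A\to B$, $M_d(f)(z):=\sum_{b\in A_+(d)} f(b)\prod_{a\in A_+(d)\setminus\{b\}}(z-a)$ and $P_d(f)(z):=M_d(f)(z)-M_d(f)(0)$; for $\mathbb{F}_q$-linear $f$ and $d\ge1$, $P_d(f)$ is an $\mathbb{F}_q$-linear polynomial of degree at most $q^{d-1}$, and the coefficients $\alpha_{d,i}(f)\in\mathrm{Frac}(B)$, $0\le i<d$, are defined by the unique expansion $(-1)^d\frac{L_d}{D_d}P_d(f)(z)=\sum_{i=0}^{d-1}\alpha_{d,i}(f)e_i(z)$. *)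

theory Defs
  imports "HOL-Computational_Algebra.Computational_Algebra"
begin

text \<open>A = F_q[theta] is modelled as the type 'k poly with 'k a finite field.
 B is an integral domain 'b, containing A via an injective ring homomorphism iota.
 Frac(B) is 'b fract.\<close>

definition Adeg :: "nat \<Rightarrow> 'k::{field_gcd,finite} poly set" where
  "Adeg d = {p. p = 0 \<or> degree p < d}"

definition Amon :: "nat \<Rightarrow> 'k::{field_gcd,finite} poly set" where
  "Amon d = {p. lead_coeff p = 1 \<and> degree p = d}"

definition Dd :: "nat \<Rightarrow> 'k::{field_gcd,finite} poly" where
  "Dd d = (\<Prod>p\<in>Amon d. p)"

definition Ld :: "nat \<Rightarrow> 'k::{field_gcd,finite} poly" where
  "Ld d = (if d = 0 then 1 else Lcm {p. degree p = d})"

definition emb :: "('k::{field_gcd,finite} poly \<Rightarrow> 'b::idom) \<Rightarrow> 'k poly \<Rightarrow> 'b fract" where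
  "emb \<iota> a = to_fract (\<iota> a)"

definition e_pol :: "('k::{field_gcd,finite} poly \<Rightarrow> 'b::idom) \<Rightarrow> nat \<Rightarrow> 'b fract poly" where
  "e_pol \<iota> i = (\<Prod>a\<in>Adeg i. [:- emb \<iota> a, 1:])"

definition M_pol :: "('k::{field_gcd,finite} poly \<Rightarrow> 'b::idom) \<Rightarrow> nat \<Rightarrow> ('k poly \<Rightarrow> 'b) \<Rightarrow> 'b fract poly" where
  "M_pol \<iota> d f = (\<Sum>b\<in>Amon d. smult (to_fract (f b)) (\<Prod>a\<in>Amon d - {b}. [:- emb \<iota> a, 1:]))"

definition P_pol :: "('k::{field_gcd,finite} poly \<Rightarrow> 'b::idom) \<Rightarrow> nat \<Rightarrow> ('k poly \<Rightarrow> 'b) \<Rightarrow> 'b fract poly" where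
  "P_pol \<iota> d f = M_pol \<iota> d f - [:poly (M_pol \<iota> d f) 0:]"

definition nP_pol :: "('k::{field_gcd,finite} poly \<Rightarrow> 'b::idom) \<Rightarrow> nat \<Rightarrow> ('k poly \<Rightarrow> 'b) \<Rightarrow> 'b fract poly" where
  "nP_pol \<iota> d f = smult ((-1) ^ d * emb \<iota> (Ld d) / emb \<iota> (Dd d)) (P_pol \<iota> d f)"

definition alpha :: "('k::{field_gcd,finite} poly \<Rightarrow> 'b::idom) \<Rightarrow> nat \<Rightarrow> nat \<Rightarrow> ('k poly \<Rightarrow> 'b) \<Rightarrow> 'b fract" where
  "alpha \<iota> d i f = (THE c. (\<forall>j. d \<le> j \<longrightarrow> c j = 0) \<and>
      nP_pol \<iota> d f = (\<Sum>j<d. smult (c j) (e_pol \<iota> j))) i"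

end

theory Submission
  imports Defs
begin


lemma pow_card_k: fixes x :: "'k::{field,finite}" shows "x ^ card (UNIV::'k set) = x"
proof (cases "x = 0")
  case False
  have "x * (\<Prod>y\<in>UNIV-{0}. x * y) = x * x ^ (card (UNIV :: 'k set) - 1) * \<Prod>(UNIV-{0})"
    by (simp add: prod.distrib mult_ac)
  also have "x * x ^ (card (UNIV :: 'k set) - 1) = x ^ Suc (card (UNIV :: 'k set) - 1)"
    by (subst power_Suc) auto
  also have "Suc (card (UNIV :: 'k set) - 1) = card (UNIV :: 'k set)"
    using finite_UNIV_card_ge_0[where ?'a = 'k] by simp
  also have "(\<Prod>y\<in>UNIV-{0}. x * y) = (\<Prod>y\<in>UNIV-{0}. y)"
    by (rule prod.reindex_bij_witness[of _ "\<lambda>y. y / x" "\<lambda>y. x * y"]) (use False in auto)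
  finally show ?thesis
    by simp
qed (use finite_UNIV_card_ge_0[where ?'a = 'k] in auto)

lemma pow_card_pow_k: fixes x :: "'k::{field,finite}" shows "x ^ (card (UNIV::'k set) ^ n) = x"
  by (induction n) (simp_all add: pow_card_k power_mult)

lemma card_ge2_k: "card (UNIV::'k::{field,finite} set) \<ge> 2"
proof -
  have "card {0::'k, 1} \<le> card (UNIV::'k set)" by (rule card_mono) auto
  thus ?thesis by simp
qed

lemma prod_lin_all:
  "(\<Prod>g\<in>(UNIV::'k::{field,finite} set). [:-g,1:]) = monom 1 (card (UNIV::'k set)) - [:0,1:]"
  (is "?p = ?r")
proof (rule poly_eqI_degree_lead_coeff[where n = "card (UNIV::'k set)" and A = UNIV])
  have dp: "degree ?p = card (UNIV::'k set)"
    by (subst degree_prod_sum_eq) auto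
  have lp: "lead_coeff ?p = 1" by (simp add: lead_coeff_prod)
  show "coeff ?p (card (UNIV::'k set)) = coeff ?r (card (UNIV::'k set))"
  proof -
    obtain m where m: "card (UNIV::'k set) = Suc (Suc m)" using card_ge2_k[where 'k='k]
      by (metis add_2_eq_Suc le_Suc_ex)
    show ?thesis using lp dp m by (simp add: coeff_monom)
  qed
  show "card (UNIV::'k set) \<le> card (UNIV::'k set)" by simp
  show "degree ?p \<le> card (UNIV::'k set)" using dp by simp
  show "degree ?r \<le> card (UNIV::'k set)"
    using card_ge2_k[where 'k='k]
    by (intro order.trans[OF degree_diff_le_max]) (auto simp: degree_monom_eq)
  fix z :: 'k
  have "poly ?p z = (\<Prod>g\<in>UNIV. z - g)" by (simp add: poly_prod)
  also have "\<dots> = 0" by (rule prod_zero) auto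
  finally show "poly ?p z = poly ?r z" by (simp add: poly_monom pow_card_k)
qed

lemma coeff1_prod_lin_all: "coeff (\<Prod>g\<in>(UNIV::'k::{field,finite} set). [:-g,1:]) 1 = -1"
  using card_ge2_k[where 'k='k] by (simp add: prod_lin_all coeff_monom)

lemma neg1_pow_card: "(-1::'k::{field,finite}) ^ card (UNIV::'k set) = -1"
proof -
  let ?p = "\<Prod>g\<in>(UNIV::'k set). [:-g,1:]"
  have "?p \<circ>\<^sub>p [:0,-1:] = (\<Prod>g\<in>UNIV. smult (-1) [:g,1:])"
    by (simp add: pcompose_prod pcompose_pCons)
  also have "\<dots> = smult ((-1) ^ card (UNIV::'k set)) (\<Prod>g\<in>UNIV. [:g,1:])"
    by (simp only: prod_smult prod_constant)
  also have "(\<Prod>g\<in>UNIV. [:g,1:]) = ?p"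
    by (rule prod.reindex_bij_witness[of _ uminus uminus]) auto
  finally have "coeff (?p \<circ>\<^sub>p [:0,-1:]) 1 = coeff (smult ((-1) ^ card (UNIV::'k set)) ?p) 1" by simp
  hence "- coeff ?p 1 = (-1) ^ card (UNIV::'k set) * coeff ?p 1"
    by (simp add: coeff_pcompose_linear)
  moreover have "coeff ?p (Suc 0) = -1" using coeff1_prod_lin_all[where 'k='k] by simp
  ultimately have "- ((- 1) ^ card (UNIV::'k set)) = (1::'k)" by simp
  thus ?thesis by (metis minus_minus)
qed

lemma neg1_pow_card_minus1: "(-1::'k::{field,finite}) ^ (card (UNIV::'k set) - 1) = 1"
proof -
  have "(-1::'k) ^ card (UNIV::'k set) = (-1) ^ (card (UNIV::'k set) - 1) * (-1)"
    using card_ge2_k[where 'k='k]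
    by (metis One_nat_def Suc_pred less_le_trans not_less_eq_eq numeral_2_eq_2 power_Suc2 zero_less_Suc)
  thus ?thesis using neg1_pow_card[where 'k='k] by simp
qed

lemma wilson_k: "(\<Prod>g\<in>(UNIV::'k::{field,finite} set) - {0}. g) = -1"
proof -
  let ?h = "\<Prod>g\<in>(UNIV::'k set) - {0}. [:-g,1:]"
  have "(\<Prod>g\<in>(UNIV::'k set). [:-g,1:]) = [:0,1:] * ?h"
    by (subst prod.remove[where x = 0]) auto
  hence "coeff ?h 0 = -1" using coeff1_prod_lin_all[where 'k='k] by simp
  hence "poly ?h 0 = -1" by (simp add: poly_0_coeff_0)
  hence "(\<Prod>g\<in>(UNIV::'k set) - {0}. (-1) * g) = -1" by (simp add: poly_prod)
  hence "(\<Prod>g\<in>(UNIV::'k set) - {0}. -1) * (\<Prod>g\<in>(UNIV::'k set) - {0}. g) = -1"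
    by (simp only: prod.distrib)
  hence "(-1) ^ (card (UNIV::'k set) - 1) * (\<Prod>g\<in>(UNIV::'k set) - {0}. g) = -1"
    by (simp only: prod_constant card_Diff_singleton_if) simp
  thus ?thesis using neg1_pow_card_minus1[where 'k='k] by simp
qed



lemma Adeg_coeff: "a \<in> Adeg n \<longleftrightarrow> (\<forall>k\<ge>n. coeff a k = 0)"
proof
  assume "a \<in> Adeg n" thus "\<forall>k\<ge>n. coeff a k = 0"
    by (auto simp: Adeg_def coeff_eq_0)
next
  assume h: "\<forall>k\<ge>n. coeff a k = 0"
  show "a \<in> Adeg n"
  proof (cases "a = 0")
    case False thus ?thesis using degree_lessI[of a n] h by (auto simp: Adeg_def)
  qed (simp add: Adeg_def)
qed

lemma Amon_coeff: "a \<in> Amon n \<longleftrightarrow> coeff a n = 1 \<and> (\<forall>k>n. coeff a k = 0)"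
proof
  assume "a \<in> Amon n" thus "coeff a n = 1 \<and> (\<forall>k>n. coeff a k = 0)"
    by (auto simp: Amon_def coeff_eq_0)
next
  assume h: "coeff a n = 1 \<and> (\<forall>k>n. coeff a k = 0)"
  hence "degree a \<le> n" by (intro degree_le) auto
  moreover have "n \<le> degree a" using h by (intro le_degree) auto
  ultimately have "degree a = n" by simp
  thus "a \<in> Amon n" using h by (simp add: Amon_def)
qed

lemma Adeg_0 [simp]: "0 \<in> Adeg n" by (simp add: Adeg_def)
lemma Adeg_add [intro]: "a \<in> Adeg n \<Longrightarrow> b \<in> Adeg n \<Longrightarrow> a + b \<in> Adeg n"
  by (simp add: Adeg_coeff)
lemma Adeg_diff [intro]: "a \<in> Adeg n \<Longrightarrow> b \<in> Adeg n \<Longrightarrow> a - b \<in> Adeg n"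
  by (simp add: Adeg_coeff)
lemma Adeg_uminus [intro]: "a \<in> Adeg n \<Longrightarrow> - a \<in> Adeg n"
  by (simp add: Adeg_coeff)
lemma Adeg_smult [intro]: "a \<in> Adeg n \<Longrightarrow> smult c a \<in> Adeg n"
  by (simp add: Adeg_coeff)
lemma Adeg_const_mult [intro]: "a \<in> Adeg n \<Longrightarrow> [:c:] * a \<in> Adeg n"
  by (simp add: Adeg_coeff)
lemma Adeg_mono: "a \<in> Adeg n \<Longrightarrow> n \<le> m \<Longrightarrow> a \<in> Adeg m"
  by (simp add: Adeg_coeff)
lemma Adeg_Suc: "a \<in> Adeg n \<Longrightarrow> a \<in> Adeg (Suc n)"
  by (simp add: Adeg_coeff)
lemma monom_notin_Adeg: "monom (1::'k::{field_gcd,finite}) n \<notin> Adeg n"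
  by (auto simp: Adeg_coeff)
lemma monom_in_Adeg_Suc: "smult c (monom (1::'k::{field_gcd,finite}) n) \<in> Adeg (Suc n)"
  by (auto simp: Adeg_coeff coeff_monom)
lemma Adeg_decomp: "a \<in> Adeg (Suc n) \<Longrightarrow> a - smult (coeff a n) (monom 1 n) \<in> Adeg n"
  by (auto simp: Adeg_coeff coeff_monom)
lemma Amon_add: "a \<in> Amon n \<Longrightarrow> b \<in> Adeg n \<Longrightarrow> a + b \<in> Amon n"
  by (simp add: Amon_coeff Adeg_coeff)
lemma Amon_diff: "a \<in> Amon n \<Longrightarrow> b \<in> Adeg n \<Longrightarrow> a - b \<in> Amon n"
  by (simp add: Amon_coeff Adeg_coeff)
lemma Amon_diff_Amon: "a \<in> Amon n \<Longrightarrow> b \<in> Amon n \<Longrightarrow> a - b \<in> Adeg n"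
  by (auto simp: Amon_coeff Adeg_coeff) (metis le_neq_implies_less)
lemma monom_Amon: "monom 1 n \<in> Amon n"
  by (simp add: Amon_coeff coeff_monom)
lemma Amon_nz: "a \<in> Amon n \<Longrightarrow> a \<noteq> 0"
  by (auto simp: Amon_coeff)
lemma Amon_degree: "a \<in> Amon n \<Longrightarrow> degree a = n"
  by (auto simp: Amon_def)

lemma Adeg_eq_Poly: "(Adeg n :: 'k::{field_gcd,finite} poly set) = Poly ` {xs. set xs \<subseteq> UNIV \<and> length xs = n}"
proof (intro equalityI subsetI)
  fix a :: "'k poly" assume a: "a \<in> Adeg n"
  have "a = Poly (map (coeff a) [0..<n])"
    using a by (intro poly_eqI) (auto simp: coeff_Poly_eq nth_default_def Adeg_coeff)
  thus "a \<in> Poly ` {xs. set xs \<subseteq> UNIV \<and> length xs = n}" by auto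
next
  fix a :: "'k poly" assume "a \<in> Poly ` {xs. set xs \<subseteq> UNIV \<and> length xs = n}"
  then obtain xs where "length xs = n" "a = Poly xs" by auto
  thus "a \<in> Adeg n" by (auto simp: Adeg_coeff coeff_Poly_eq nth_default_def)
qed

lemma inj_on_Poly_len: "inj_on Poly {xs. set xs \<subseteq> UNIV \<and> length xs = n}"
proof (rule inj_onI)
  fix xs ys :: "'a::zero list"
  assume xs: "xs \<in> {xs. set xs \<subseteq> UNIV \<and> length xs = n}" and ys: "ys \<in> {xs. set xs \<subseteq> UNIV \<and> length xs = n}"
    and e: "Poly xs = Poly ys"
  show "xs = ys"
  proof (rule nth_equalityI)
    show "length xs = length ys" using xs ys by simp
    fix i assume "i < length xs"
    hence "coeff (Poly xs) i = xs ! i" "coeff (Poly ys) i = ys ! i"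
      using xs ys by (auto simp: coeff_Poly_eq nth_default_def)
    thus "xs ! i = ys ! i" using e by simp
  qed
qed

lemma card_Adeg: "card (Adeg n :: 'k::{field_gcd,finite} poly set) = card (UNIV::'k set) ^ n"
  unfolding Adeg_eq_Poly by (simp only: card_image[OF inj_on_Poly_len] card_lists_length_eq[OF finite_UNIV])

lemma finite_Adeg [simp]: "finite (Adeg n :: 'k::{field_gcd,finite} poly set)"
proof -
  have "finite {xs::'k list. set xs \<subseteq> UNIV \<and> length xs = n}"
    by (rule finite_lists_length_eq) simp
  thus ?thesis unfolding Adeg_eq_Poly by simp
qed

lemma Amon_eq: "Amon n = (\<lambda>b. monom 1 n + b) ` (Adeg n :: 'k::{field_gcd,finite} poly set)"
proof (intro equalityI subsetI)
  fix a :: "'k poly" assume a: "a \<in> Amon n"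
  hence "a - monom 1 n \<in> Adeg n" using Amon_diff_Amon monom_Amon by blast
  moreover have "a = monom 1 n + (a - monom 1 n)" by simp
  ultimately show "a \<in> (\<lambda>b. monom 1 n + b) ` Adeg n" by blast
next
  fix a :: "'k poly" assume "a \<in> (\<lambda>b. monom 1 n + b) ` Adeg n"
  then obtain b where "b \<in> Adeg n" "a = monom 1 n + b" by auto
  thus "a \<in> Amon n" using Amon_add monom_Amon by blast
qed

lemma card_Amon: "card (Amon n :: 'k::{field_gcd,finite} poly set) = card (UNIV::'k set) ^ n"
  unfolding Amon_eq by (subst card_image) (auto simp: inj_on_def card_Adeg)

lemma finite_Amon [simp]: "finite (Amon n :: 'k::{field_gcd,finite} poly set)"
  unfolding Amon_eq by simp

lemma Adeg_Suc_diff: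
  "Adeg (Suc n) - Adeg n =
     (\<lambda>(g,m). smult g m) ` ((UNIV - {0}) \<times> (Amon n :: 'k::{field_gcd,finite} poly set))"
proof (intro equalityI subsetI)
  fix c :: "'k poly" assume c: "c \<in> Adeg (Suc n) - Adeg n"
  hence hi: "\<forall>k>n. coeff c k = 0" by (auto simp: Adeg_coeff)
  from c obtain k where "k \<ge> n" "coeff c k \<noteq> 0" by (auto simp: Adeg_coeff)
  with hi have cn: "coeff c n \<noteq> 0" by (metis le_neq_implies_less)
  have "smult (1 / coeff c n) c \<in> Amon n" using cn hi by (simp add: Amon_coeff)
  moreover have "c = smult (coeff c n) (smult (1 / coeff c n) c)" using cn by simp
  ultimately show "c \<in> (\<lambda>(g,m). smult g m) ` ((UNIV - {0}) \<times> Amon n)"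
    using cn by (auto intro!: image_eqI[where x = "(coeff c n, smult (1 / coeff c n) c)"])
next
  fix c :: "'k poly" assume "c \<in> (\<lambda>(g,m). smult g m) ` ((UNIV - {0}) \<times> Amon n)"
  then obtain g m where "g \<noteq> 0" "m \<in> Amon n" "c = smult g m" by auto
  thus "c \<in> Adeg (Suc n) - Adeg n" by (auto simp: Adeg_coeff Amon_coeff)
qed

lemma inj_smult_Amon:
  "inj_on (\<lambda>(g,m). smult g m) ((UNIV - {0}) \<times> (Amon n :: 'k::{field_gcd,finite} poly set))"
proof (rule inj_onI)
  fix x y :: "'k \<times> 'k poly"
  assume x: "x \<in> (UNIV - {0}) \<times> Amon n" and y: "y \<in> (UNIV - {0}) \<times> Amon n"
    and e: "(\<lambda>(g,m). smult g m) x = (\<lambda>(g,m). smult g m) y"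
  obtain g m where gm: "x = (g,m)" by force
  obtain g' m' where gm': "y = (g',m')" by force
  have h: "g \<noteq> 0" "m \<in> Amon n" "g' \<noteq> 0" "m' \<in> Amon n" "smult g m = smult g' m'"
    using x y e gm gm' by auto
  have "g = coeff (smult g m) n" using h(2) by (simp add: Amon_coeff)
  also have "\<dots> = coeff (smult g' m') n" by (simp only: h(5))
  also have "\<dots> = g'" using h(4) by (simp add: Amon_coeff)
  finally have gg: "g = g'" .
  hence "m = m'" using h by (metis smult_eq_iff)
  thus "x = y" using gg gm gm' by simp
qed



lemma lead_coeff_normalize: "(p::'k::{field_gcd,finite} poly) \<noteq> 0 \<Longrightarrow> lead_coeff (normalize p) = 1"
proof -
  assume p: "p \<noteq> 0"
  have "normalize (lead_coeff p) = 1" using p by (simp add: is_unit_normalize dvd_field_iff)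
  hence u: "unit_factor (lead_coeff p) = lead_coeff p" using unit_factor_mult_normalize[of "lead_coeff p"] by simp
  have "lead_coeff (normalize p) * lead_coeff (unit_factor p) = lead_coeff p"
    by (metis lead_coeff_mult normalize_mult_unit_factor)
  hence "lead_coeff (normalize p) * lead_coeff p = lead_coeff p" using u by (simp add: unit_factor_poly_def)
  thus ?thesis using p by (metis mult_cancel_right2 leading_coeff_0_iff)
qed
lemma normalize_monic: "lead_coeff (p::'k::{field_gcd,finite} poly) = 1 \<Longrightarrow> normalize p = p"
  by (simp add: normalize_poly_def pCons_one)

lemma Dd_nz: "Dd n \<noteq> (0::'k::{field_gcd,finite} poly)"
  unfolding Dd_def by (auto dest: Amon_nz)

lemma Dd_lead: "lead_coeff (Dd n :: 'k::{field_gcd,finite} poly) = 1"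
  unfolding Dd_def lead_coeff_prod by (rule prod.neutral) (auto simp: Amon_def)

definition Pinz :: "nat \<Rightarrow> 'k::{field_gcd,finite} poly" where
  "Pinz n = (\<Prod>c\<in>Adeg n - {0}. c)"

definition Phi :: "nat \<Rightarrow> 'k::{field_gcd,finite} poly" where
  "Phi n = (\<Prod>j<n. Dd j ^ (card (UNIV::'k set) - 1))"

lemma Pinz_Suc: "Pinz (Suc n) = - (Pinz n * (Dd n :: 'k::{field_gcd,finite} poly) ^ (card (UNIV::'k set) - 1))"
proof -
  let ?q = "card (UNIV::'k set)"
  have split: "Adeg (Suc n) - {0} = (Adeg n - {0}) \<union> (Adeg (Suc n) - Adeg n)"
    by (auto intro: Adeg_Suc)
  have "Pinz (Suc n) = Pinz n * (\<Prod>c\<in>Adeg (Suc n) - Adeg n. c)"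
    unfolding Pinz_def split by (subst prod.union_disjoint) auto
  also have "(\<Prod>c\<in>Adeg (Suc n) - Adeg n. c) = (\<Prod>x\<in>(UNIV - {0}) \<times> (Amon n :: 'k poly set). (\<lambda>(g,m). smult g m) x)"
    unfolding Adeg_Suc_diff using prod.reindex[OF inj_smult_Amon, of "\<lambda>c. c"] by (simp add: o_def)
  also have "\<dots> = (\<Prod>g\<in>UNIV - {0}. \<Prod>m\<in>Amon n. smult g m)"
    by (simp add: prod.cartesian_product)
  also have "\<dots> = (\<Prod>g\<in>UNIV - {0}. smult (g ^ (?q ^ n)) (Dd n))"
    by (simp only: prod_smult prod_constant card_Amon Dd_def)
  also have "\<dots> = (\<Prod>g\<in>UNIV - {0}. smult g (Dd n))"
    by (simp only: pow_card_pow_k)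
  also have "\<dots> = smult (\<Prod>g\<in>UNIV - {0}. g) (Dd n ^ (?q - 1))"
    by (simp only: prod_smult prod_constant card_Diff_singleton_if) simp
  also have "\<dots> = - (Dd n ^ (?q - 1))" by (simp add: wilson_k)
  finally show ?thesis by simp
qed

lemma Pinz_Phi: "Pinz n = (-1) ^ n * (Phi n :: 'k::{field_gcd,finite} poly)"
proof (induction n)
  case 0 thus ?case by (simp add: Pinz_def Phi_def Adeg_def)
next
  case (Suc n) thus ?case by (simp add: Pinz_Suc Phi_def)
qed

lemma Phi_nz: "Phi n \<noteq> (0::'k::{field_gcd,finite} poly)"
  unfolding Phi_def using Dd_nz by auto

lemma Phi_lead: "lead_coeff (Phi n :: 'k::{field_gcd,finite} poly) = 1"
  unfolding Phi_def by (simp add: lead_coeff_prod lead_coeff_power Dd_lead)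



lemma geom_nat: "(q::nat) \<ge> 1 \<Longrightarrow> (q - 1) * (\<Sum>i<m. q ^ i) + 1 = q ^ m"
proof (induction m)
  case (Suc m)
  obtain q' where q: "q = Suc q'" using Suc.prems by (cases q) auto
  have "(q - 1) * (\<Sum>i<Suc m. q ^ i) + 1 = ((q - 1) * (\<Sum>i<m. q ^ i) + 1) + (q - 1) * q ^ m"
    by (simp add: algebra_simps)
  also have "\<dots> = q ^ m + (q - 1) * q ^ m" using Suc by simp
  also have "\<dots> = q ^ Suc m" by (simp add: q)
  finally show ?case .
qed simp

lemma count_rec:
  fixes T :: "nat \<Rightarrow> nat" and k q :: nat
  assumes k: "k \<ge> 1" and q: "q \<ge> 1"
    and T0: "\<And>j. j < k \<Longrightarrow> T j = 0"
    and T1: "\<And>j. k \<le> j \<Longrightarrow> T j = q ^ (j - k) + T (j - k)"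
  shows "T n = n div k + (q - 1) * (\<Sum>i<n. T i)"
proof (induction n rule: less_induct)
  case (less n)
  show ?case
  proof (cases "n < k")
    case True
    have "(\<Sum>i<n. T i) = 0" using True T0 by simp
    thus ?thesis using True T0 by simp
  next
    case False
    then obtain m where n: "n = m + k" by (metis add.commute le_add_diff_inverse not_less)
    have shift: "(\<Sum>i<m' + k. T i) = (\<Sum>i<m'. q ^ i + T i)" for m'
    proof (induction m')
      case 0 thus ?case using T0 by simp
    next
      case (Suc m')
      have "(\<Sum>i<Suc m' + k. T i) = (\<Sum>i<m' + k. T i) + T (m' + k)" by simp
      also have "T (m' + k) = q ^ m' + T m'" using T1[of "m' + k"] by simp
      finally show ?case using Suc by simp
    qed
    have Tn: "T n = q ^ m + T m" using T1[of n] n by simp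
    have IH: "T m = m div k + (q - 1) * (\<Sum>i<m. T i)" using less[of m] n k by simp
    have "n div k = m div k + 1" using n k by simp
    moreover have "(q - 1) * (\<Sum>i<n. T i) = (q - 1) * (\<Sum>i<m. q ^ i) + (q - 1) * (\<Sum>i<m. T i)"
      using shift[of m] n by (simp add: sum.distrib algebra_simps)
    ultimately have "n div k + (q - 1) * (\<Sum>i<n. T i) = ((q - 1) * (\<Sum>i<m. q ^ i) + 1) + (m div k + (q - 1) * (\<Sum>i<m. T i))"
      by simp
    also have "\<dots> = q ^ m + T m" using geom_nat[OF q, of m] IH by simp
    finally show ?thesis using Tn by simp
  qed
qed

context
  fixes P :: "'k::{field_gcd,finite} poly"
  assumes P: "prime P" and Pl: "lead_coeff P = 1"
begin

lemma P_nz: "P \<noteq> 0" using P by auto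
lemma P_deg: "degree P \<ge> 1"
proof (rule ccontr)
  assume "\<not> degree P \<ge> 1"
  hence "degree P = 0" by simp
  hence "is_unit P" using P_nz by (simp add: is_unit_iff_degree)
  thus False using P by auto
qed

lemma mult_Dd: "multiplicity P (Dd j) = (\<Sum>m\<in>Amon j. multiplicity P m)"
  unfolding Dd_def using P by (intro prime_elem_multiplicity_prod_distrib) (auto dest: Amon_nz)

lemma dvd_Amon_set:
  assumes "degree P \<le> j"
  shows "{m \<in> Amon j. P dvd m} = (\<lambda>r. P * r) ` Amon (j - degree P)"
proof (intro equalityI subsetI)
  fix m assume "m \<in> {m \<in> Amon j. P dvd m}"
  then obtain r where m: "m \<in> Amon j" "m = P * r" by (auto elim: dvdE)
  hence r: "r \<noteq> 0" using Amon_nz[of m j] by auto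
  have "degree m = degree P + degree r" using m r P_nz by (simp add: degree_mult_eq)
  moreover have "lead_coeff m = lead_coeff r" using m Pl by (simp add: lead_coeff_mult)
  ultimately have "r \<in> Amon (j - degree P)" using m by (auto simp: Amon_def)
  thus "m \<in> (\<lambda>r. P * r) ` Amon (j - degree P)" using m by auto
next
  fix m assume "m \<in> (\<lambda>r. P * r) ` Amon (j - degree P)"
  then obtain r where r: "r \<in> Amon (j - degree P)" "m = P * r" by auto
  hence "r \<noteq> 0" using Amon_nz by auto
  hence "degree m = j" using r P_nz assms by (simp add: degree_mult_eq Amon_def)
  moreover have "lead_coeff m = 1" using r Pl by (auto simp: lead_coeff_mult Amon_def)
  ultimately show "m \<in> {m \<in> Amon j. P dvd m}" using r by (simp add: Amon_def)
qed

lemma T_low: "j < degree P \<Longrightarrow> multiplicity P (Dd j) = 0"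
proof -
  assume j: "j < degree P"
  have "multiplicity P m = 0" if "m \<in> Amon j" for m
  proof (rule not_dvd_imp_multiplicity_0)
    show "\<not> P dvd m"
    proof
      assume "P dvd m"
      hence "degree P \<le> degree m" using Amon_nz[OF that] by (rule dvd_imp_degree_le)
      thus False using j that by (simp add: Amon_def)
    qed
  qed
  thus ?thesis by (simp add: mult_Dd)
qed

lemma T_high: "degree P \<le> j \<Longrightarrow>
  multiplicity P (Dd j) = card (UNIV::'k set) ^ (j - degree P) + multiplicity P (Dd (j - degree P))"
proof -
  assume j: "degree P \<le> j"
  have "multiplicity P (Dd j) = (\<Sum>m\<in>Amon j. if P dvd m then multiplicity P m else 0)"
    unfolding mult_Dd by (intro sum.cong) (auto intro: not_dvd_imp_multiplicity_0)
  also have "\<dots> = (\<Sum>m\<in>{m \<in> Amon j. P dvd m}. multiplicity P m)"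
    by (simp add: sum.inter_filter)
  also have "\<dots> = (\<Sum>r\<in>Amon (j - degree P). multiplicity P (P * r))"
    unfolding dvd_Amon_set[OF j] using P_nz by (subst sum.reindex) (auto simp: inj_on_def)
  also have "\<dots> = (\<Sum>r\<in>Amon (j - degree P). 1 + multiplicity P r)"
  proof (intro sum.cong refl)
    fix r :: "'k poly" assume "r \<in> Amon (j - degree P)"
    hence "r \<noteq> 0" by (rule Amon_nz)
    thus "multiplicity P (P * r) = 1 + multiplicity P r"
      using P P_nz by (simp add: prime_elem_multiplicity_mult_distrib multiplicity_self)
  qed
  also have "\<dots> = card (UNIV::'k set) ^ (j - degree P) + multiplicity P (Dd (j - degree P))"
    by (simp only: sum.distrib card_Amon mult_Dd sum_constant) simp
  finally show ?thesis .
qed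

lemma mult_Phi: "multiplicity P (Phi n) = (card (UNIV::'k set) - 1) * (\<Sum>j<n. multiplicity P (Dd j))"
proof -
  have "multiplicity P (Phi n) = (\<Sum>j<n. multiplicity P (Dd j ^ (card (UNIV::'k set) - 1)))"
    unfolding Phi_def using P Dd_nz[where 'k='k] by (intro prime_elem_multiplicity_prod_distrib) auto
  also have "\<dots> = (\<Sum>j<n. (card (UNIV::'k set) - 1) * multiplicity P (Dd j))"
    using P Dd_nz[where 'k='k] by (intro sum.cong refl) (simp add: prime_elem_multiplicity_power_distrib)
  finally show ?thesis by (simp add: sum_distrib_left)
qed

lemma mult_Dd_Phi: "multiplicity P (Dd n) = n div degree P + multiplicity P (Phi n)"
  unfolding mult_Phi
  by (rule count_rec[where T = "\<lambda>j. multiplicity P (Dd j)"])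
     (use P_deg card_ge2_k[where 'k='k] T_low T_high in auto)

end



lemma Amon_0: "Amon 0 = {1::'k::{field_gcd,finite} poly}"
proof -
  have "Adeg 0 = {0::'k poly}" by (auto simp: Adeg_def)
  thus ?thesis by (simp add: Amon_eq)
qed

lemma prime_norm:
  fixes p :: "'k::{field_gcd,finite} poly"
  assumes "prime p"
  shows "prime (normalize p)" "lead_coeff (normalize p) = 1"
    "\<And>x. multiplicity (normalize p) x = multiplicity p x"
proof -
  have "p \<noteq> 0" using assms by auto
  thus "lead_coeff (normalize p) = 1" by (rule lead_coeff_normalize)
qed (use assms in \<open>auto simp: multiplicity_normalize_left\<close>)

lemma Ld_Phi: "Ld n * Phi n = (Dd n :: 'k::{field_gcd,finite} poly)"
proof (cases "n = 0")
  case True thus ?thesis by (simp add: Ld_def Phi_def Dd_def Amon_0)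
next
  case False
  have dvd1: "Phi n dvd (Dd n :: 'k poly)"
  proof (rule multiplicity_le_imp_dvd[OF Phi_nz])
    fix p :: "'k poly" assume p: "prime p"
    note pn = prime_norm[OF p]
    show "multiplicity p (Phi n) \<le> multiplicity p (Dd n)"
      using mult_Dd_Phi[OF pn(1,2), of n] pn(3) by simp
  qed
  then obtain G :: "'k poly" where DG: "Dd n = Phi n * G" by (elim dvdE)
  have Gnz: "G \<noteq> 0" using DG Dd_nz[where 'k='k] by auto
  have Gl: "lead_coeff G = 1" using DG Dd_lead[where 'k='k] Phi_lead[where 'k='k] by (metis lead_coeff_mult mult_1)
  have multG: "multiplicity P G = n div degree P" if P: "prime P" "lead_coeff P = 1" for P :: "'k poly"
  proof -
    have "multiplicity P (Dd n) = multiplicity P (Phi n) + multiplicity P G"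
      unfolding DG by (rule prime_elem_multiplicity_mult_distrib) (use P Gnz Phi_nz[where 'k='k] in auto)
    thus ?thesis using mult_Dd_Phi[OF P, of n] by simp
  qed
  define S where "S = {p::'k poly. degree p = n}"
  have finS: "finite S"
    by (rule finite_subset[OF _ finite_Adeg[of "Suc n"]]) (auto simp: S_def Adeg_def)
  have S0: "0 \<notin> S" using False by (simp add: S_def)
  have LSnz: "Lcm S \<noteq> 0" using Lcm_0_iff[OF finS] S0 by simp
  have "m dvd G" if m: "m \<in> S" for m
  proof -
    have mnz: "m \<noteq> 0" using m S0 by auto
    show ?thesis
    proof (rule multiplicity_le_imp_dvd[OF mnz])
      fix p :: "'k poly" assume p: "prime p"
      note pn = prime_norm[OF p]
      define P where "P = normalize p"
      have Pnz: "P \<noteq> 0" using pn(1) P_def by auto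
      have Pd: "degree P \<ge> 1" using P_deg[OF pn(1,2)] P_def by simp
      define v where "v = multiplicity P m"
      have "P ^ v dvd m" unfolding v_def by (rule multiplicity_dvd)
      hence "degree (P ^ v) \<le> degree m" using mnz by (rule dvd_imp_degree_le)
      hence "v * degree P \<le> n" using m Pnz by (simp add: S_def degree_power_eq)
      hence "v \<le> n div degree P" using Pd by (simp add: less_eq_div_iff_mult_less_eq)
      thus "multiplicity p m \<le> multiplicity p G"
        using multG[OF pn(1,2)] pn(3) unfolding v_def P_def by simp
    qed
  qed
  hence dvd2: "Lcm S dvd G" by (rule Lcm_least)
  have dvd3: "G dvd Lcm S"
  proof (rule multiplicity_le_imp_dvd[OF Gnz])
    fix p :: "'k poly" assume p: "prime p"
    note pn = prime_norm[OF p]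
    define P where "P = normalize p"
    have Pnz: "P \<noteq> 0" using pn(1) P_def by auto
    have Pd: "degree P \<ge> 1" using P_deg[OF pn(1,2)] P_def by simp
    define e where "e = n div degree P"
    have le: "degree P * e \<le> n" unfolding e_def by (simp add: mult.commute)
    define w where "w = P ^ e * monom 1 (n - degree P * e)"
    have "degree w = n" using Pnz le by (simp add: w_def degree_mult_eq degree_power_eq degree_monom_eq)
    hence "w \<in> S" by (simp add: S_def)
    hence "w dvd Lcm S" by (rule dvd_Lcm)
    hence "P ^ e dvd Lcm S" unfolding w_def by (rule dvd_mult_left)
    moreover have "\<not> is_unit P" using pn(1) P_def by auto
    ultimately have "e \<le> multiplicity P (Lcm S)" using LSnz by (intro multiplicity_geI) auto
    thus "multiplicity p G \<le> multiplicity p (Lcm S)"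
      using multG[OF pn(1,2)] pn(3) unfolding e_def P_def by simp
  qed
  have "Lcm S = G"
    using associatedI[OF dvd2 dvd3] normalize_monic[OF Gl] by simp
  hence "Ld n = G" using False by (simp add: Ld_def S_def)
  thus ?thesis using DG by (simp add: mult.commute)
qed



locale lsetup =
  fixes \<iota> :: "'k::{field_gcd,finite} poly \<Rightarrow> 'b::idom" and f :: "'k poly \<Rightarrow> 'b"
  assumes hom_add: "\<And>a b. \<iota> (a + b) = \<iota> a + \<iota> b"
    and hom_mult: "\<And>a b. \<iota> (a * b) = \<iota> a * \<iota> b"
    and hom_one: "\<iota> 1 = 1"
    and inj: "inj \<iota>"
    and f_add: "\<And>a b. f (a + b) = f a + f b"
    and f_smult: "\<And>c a. f (smult c a) = \<iota> [:c:] * f a"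
begin

abbreviation E where "E \<equiv> emb \<iota>"
definition F where "F a = to_fract (f a)"

lemma hom_zero: "\<iota> 0 = 0"
  using hom_add[of 0 0] by (metis add.right_neutral add_left_cancel)
lemma hom_uminus: "\<iota> (- a) = - \<iota> a"
proof -
  have "\<iota> a + \<iota> (- a) = 0" using hom_add[of a "-a"] hom_zero by simp
  thus ?thesis by (rule minus_unique[symmetric])
qed
lemma E_add: "E (a + b) = E a + E b" by (simp add: emb_def hom_add)
lemma E_mult: "E (a * b) = E a * E b" by (simp add: emb_def hom_mult)
lemma E_one: "E 1 = 1" by (simp add: emb_def hom_one)
lemma E_zero: "E 0 = 0" by (simp add: emb_def hom_zero)
lemma E_uminus: "E (- a) = - E a" by (simp add: emb_def hom_uminus)
lemma E_diff: "E (a - b) = E a - E b" using E_add[of a "-b"] E_uminus[of b] by simp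
lemma E_inj: "E a = E b \<longleftrightarrow> a = b" using inj by (auto simp: emb_def inj_eq)
lemma E_eq0: "E a = 0 \<longleftrightarrow> a = 0" using E_inj[of a 0] E_zero by simp
lemma E_power: "E (a ^ n) = E a ^ n" by (induction n) (simp_all add: E_one E_mult)
lemma E_prod: "E (prod g A) = (\<Prod>x\<in>A. E (g x))"
proof (induction A rule: infinite_finite_induct)
  case (infinite A) thus ?case by (simp add: E_one)
next
  case empty thus ?case by (simp add: E_one)
next
  case (insert x A) thus ?case by (simp add: E_mult)
qed
lemma inj_E: "inj_on E A" using E_inj by (auto simp: inj_on_def)

lemma F_add: "F (a + b) = F a + F b" by (simp add: F_def f_add)
lemma F_zero: "F 0 = 0" using F_add[of 0 0] by (metis add.right_neutral add_left_cancel)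
lemma F_smult: "F (smult c a) = E [:c:] * F a" by (simp add: F_def f_smult emb_def)

lemma card_EA: "card (E ` Adeg n) = card (UNIV::'k set) ^ n"
  by (simp add: card_image[OF inj_E] card_Adeg)
lemma card_EM: "card (E ` Amon n) = card (UNIV::'k set) ^ n"
  by (simp add: card_image[OF inj_E] card_Amon)
lemma qq_pos: "card (UNIV::'k set) ^ n \<ge> 1"
  using card_ge2_k[where 'k='k] by simp

lemma poly_e: "poly (e_pol \<iota> n) x = (\<Prod>a\<in>Adeg n. x - E a)"
  by (simp add: e_pol_def poly_prod)

lemma e_deg: "degree (e_pol \<iota> n) = card (UNIV::'k set) ^ n"
  unfolding e_pol_def by (subst degree_prod_sum_eq) (auto simp: card_Adeg)

lemma e_lead: "lead_coeff (e_pol \<iota> n) = 1"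
  unfolding e_pol_def by (simp add: lead_coeff_prod)

lemma e_coeff_top: "coeff (e_pol \<iota> n) (card (UNIV::'k set) ^ n) = 1"
  using e_lead e_deg by simp

lemma e_root: "b \<in> Adeg n \<Longrightarrow> poly (e_pol \<iota> n) (E b) = 0"
  unfolding poly_e by (rule prod_zero) auto

lemma e_nonroot: "c \<notin> Adeg n \<Longrightarrow> poly (e_pol \<iota> n) (E c) \<noteq> 0"
  unfolding poly_e using E_inj by auto

lemma e_shift: "b \<in> Adeg n \<Longrightarrow> poly (e_pol \<iota> n) (x + E b) = poly (e_pol \<iota> n) x"
  unfolding poly_e
proof -
  assume b: "b \<in> Adeg n"
  show "(\<Prod>a\<in>Adeg n. x + E b - E a) = (\<Prod>a\<in>Adeg n. x - E a)"
    by (rule prod.reindex_bij_witness[of _ "\<lambda>a. a + b" "\<lambda>a. a - b"])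
       (use b in \<open>auto simp: E_add E_diff\<close>)
qed

lemma e_add: "poly (e_pol \<iota> n) (x + y) = poly (e_pol \<iota> n) x + poly (e_pol \<iota> n) y"
proof -
  let ?e = "e_pol \<iota> n" and ?N = "card (UNIV::'k set) ^ n"
  let ?p1 = "?e \<circ>\<^sub>p [:x, 1:]" and ?p2 = "?e + [:poly ?e x:]"
  have N1: "?N \<ge> 1" by (rule qq_pos)
  have "?p1 = ?p2"
  proof (rule poly_eqI_degree_lead_coeff[where n = ?N and A = "E ` Adeg n"])
    have "degree ?p1 = ?N" by (simp add: degree_pcompose e_deg)
    moreover have "lead_coeff ?p1 = 1" by (simp add: lead_coeff_comp e_lead)
    moreover have "coeff [:poly ?e x:] ?N = 0"
      using N1 by (cases ?N) (auto simp: coeff_pCons)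
    ultimately show "coeff ?p1 ?N = coeff ?p2 ?N" using e_coeff_top by simp
    show "?N \<le> card (E ` Adeg n)" by (simp add: card_EA)
    show "degree ?p1 \<le> ?N" by (simp add: degree_pcompose e_deg)
    show "degree ?p2 \<le> ?N" by (rule order.trans[OF degree_add_le]) (auto simp: e_deg)
    fix z assume "z \<in> E ` Adeg n"
    then obtain b where b: "b \<in> Adeg n" "z = E b" by auto
    show "poly ?p1 z = poly ?p2 z"
      using b by (simp add: poly_pcompose e_shift e_root add.commute)
  qed
  hence "poly ?p1 y = poly ?p2 y" by simp
  thus ?thesis by (simp add: poly_pcompose)
qed

lemma e_hom: "poly (e_pol \<iota> n) (E [:g:] * x) = E [:g:] * poly (e_pol \<iota> n) x"
proof -
  let ?e = "e_pol \<iota> n" and ?N = "card (UNIV::'k set) ^ n"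
  let ?p1 = "?e \<circ>\<^sub>p [:0, E [:g:]:]" and ?p2 = "smult (E [:g:]) ?e"
  have "?p1 = ?p2"
  proof (rule poly_eqI_degree_lead_coeff[where n = ?N and A = "E ` Adeg n"])
    have "E [:g:] ^ ?N = E [:g:]"
      by (simp add: E_power[symmetric] poly_const_pow pow_card_pow_k)
    thus "coeff ?p1 ?N = coeff ?p2 ?N" by (simp add: coeff_pcompose_linear e_coeff_top)
    show "?N \<le> card (E ` Adeg n)" by (simp add: card_EA)
    show "degree ?p1 \<le> ?N"
      by (rule order.trans[OF degree_pcompose_le]) (auto simp: e_deg)
    show "degree ?p2 \<le> ?N" by (rule order.trans[OF degree_smult_le]) (simp add: e_deg)
    fix z assume "z \<in> E ` Adeg n"
    then obtain b where b: "b \<in> Adeg n" "z = E b" by auto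
    have "[:g:] * b \<in> Adeg n" using b by auto
    thus "poly ?p1 z = poly ?p2 z"
      using b by (simp add: poly_pcompose e_root E_mult[symmetric])
  qed
  hence "poly ?p1 x = poly ?p2 x" by simp
  thus ?thesis by (simp add: poly_pcompose mult.commute)
qed

end



context lsetup
begin

definition R where "R c n = (\<Sum>j<n. smult (c j) (e_pol \<iota> j))"
definition uu where "uu n = (-1) ^ n * E (Ld n) / E (Dd n)"

lemma R_poly: "poly (R c n) x = (\<Sum>j<n. c j * poly (e_pol \<iota> j) x)"
  by (simp add: R_def poly_sum)

lemma R_add: "poly (R c n) (x + y) = poly (R c n) x + poly (R c n) y"
  by (simp add: R_poly e_add distrib_left sum.distrib)

lemma R_hom: "poly (R c n) (E [:g:] * x) = E [:g:] * poly (R c n) x"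
  by (simp add: R_poly e_hom sum_distrib_left mult.left_commute)

lemma R_Suc: "R c (Suc n) = R c n + smult (c n) (e_pol \<iota> n)"
  by (simp add: R_def)

lemma R_cong: "(\<And>j. j < n \<Longrightarrow> c j = c' j) \<Longrightarrow> R c n = R c' n"
  unfolding R_def by (intro sum.cong) auto

lemma R_deg: "degree (R c n) < card (UNIV::'k set) ^ n"
proof (induction n)
  case 0 thus ?case by (simp add: R_def)
next
  case (Suc n)
  have q2: "card (UNIV::'k set) ^ n < card (UNIV::'k set) ^ Suc n"
    using card_ge2_k[where 'k='k] by simp
  have "degree (R c (Suc n)) \<le> max (degree (R c n)) (degree (smult (c n) (e_pol \<iota> n)))"
    unfolding R_Suc by (rule degree_add_le_max)
  also have "\<dots> \<le> card (UNIV::'k set) ^ n"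
    using Suc degree_smult_le[of "c n" "e_pol \<iota> n"] by (simp add: e_deg)
  finally show ?case using q2 by linarith
qed

lemma R_unique: "R c n = R c' n \<Longrightarrow> j < n \<Longrightarrow> c j = c' j"
proof (induction n arbitrary: j)
  case 0 thus ?case by simp
next
  case (Suc n)
  let ?N = "card (UNIV::'k set) ^ n"
  have "coeff (R c (Suc n)) ?N = coeff (R c' (Suc n)) ?N" using Suc.prems by simp
  moreover have "coeff (R c n) ?N = 0" "coeff (R c' n) ?N = 0"
    using R_deg[of c n] R_deg[of c' n] by (auto intro: coeff_eq_0)
  ultimately have cn: "c n = c' n" by (simp add: R_Suc e_coeff_top)
  hence "R c n = R c' n" using Suc.prems by (simp add: R_Suc)
  thus ?case using Suc cn by (cases "j = n") auto
qed

lemma deg_M: "degree (M_pol \<iota> n f) \<le> card (UNIV::'k set) ^ n - 1"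
  unfolding M_pol_def
proof (rule degree_sum_le)
  show "finite (Amon n)" by simp
  fix b :: "'k poly" assume b: "b \<in> Amon n"
  have "degree (\<Prod>a\<in>Amon n - {b}. [:- E a, 1:]) = card (Amon n - {b})"
    by (subst degree_prod_sum_eq) auto
  also have "\<dots> = card (UNIV::'k set) ^ n - 1" using b by (simp add: card_Amon)
  finally show "degree (smult (to_fract (f b)) (\<Prod>a\<in>Amon n - {b}. [:- E a, 1:])) \<le> card (UNIV::'k set) ^ n - 1"
    using degree_smult_le by (metis)
qed

lemma poly_M: assumes a: "a \<in> Amon n"
  shows "poly (M_pol \<iota> n f) (E a) = F a * E (Pinz n)"
proof -
  have "poly (M_pol \<iota> n f) (E a) = (\<Sum>b\<in>Amon n. F b * (\<Prod>c\<in>Amon n - {b}. E a - E c))"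
    by (simp add: M_pol_def poly_sum poly_prod F_def)
  also have "\<dots> = F a * (\<Prod>c\<in>Amon n - {a}. E a - E c) +
      (\<Sum>b\<in>Amon n - {a}. F b * (\<Prod>c\<in>Amon n - {b}. E a - E c))"
    by (rule sum.remove[OF finite_Amon a])
  also have "(\<Sum>b\<in>Amon n - {a}. F b * (\<Prod>c\<in>Amon n - {b}. E a - E c)) = 0"
  proof (rule sum.neutral, rule ballI)
    fix b assume b: "b \<in> Amon n - {a}"
    have "(\<Prod>c\<in>Amon n - {b}. E a - E c) = 0"
      by (rule prod_zero) (use a b in auto)
    thus "F b * (\<Prod>c\<in>Amon n - {b}. E a - E c) = 0" by simp
  qed
  also have "F a * (\<Prod>c\<in>Amon n - {a}. E a - E c) + 0 = F a * (\<Prod>c\<in>Amon n - {a}. E a - E c)" by simp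
  also have "(\<Prod>c\<in>Amon n - {a}. E a - E c) = (\<Prod>d\<in>Adeg n - {0}. E d)"
    by (rule prod.reindex_bij_witness[of _ "\<lambda>d. a - d" "\<lambda>c. a - c"])
       (use a in \<open>auto simp: E_diff intro: Amon_diff_Amon Amon_diff\<close>)
  also have "\<dots> = E (Pinz n)" by (simp add: Pinz_def E_prod)
  finally show ?thesis .
qed

lemma uu_Pinz: "uu n * E (Pinz n) = 1"
proof -
  have D: "E (Dd n) \<noteq> 0" using Dd_nz by (simp add: E_eq0)
  have "E (Pinz n) = (-1) ^ n * E (Phi n)"
    by (simp add: Pinz_Phi E_mult E_power E_uminus E_one)
  hence "uu n * E (Pinz n) = ((-1) ^ n * (-1) ^ n) * (E (Ld n) * E (Phi n)) / E (Dd n)"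
    by (simp add: uu_def)
  also have "(-1) ^ n * (-1) ^ n = (1 :: 'b fract)" by (simp add: power_mult_distrib[symmetric])
  also have "E (Ld n) * E (Phi n) = E (Dd n)" by (simp add: E_mult[symmetric] Ld_Phi)
  finally show ?thesis using D by simp
qed

lemma nP_eq: "nP_pol \<iota> n f = smult (uu n) (M_pol \<iota> n f) - [:poly (smult (uu n) (M_pol \<iota> n f)) 0:]"
  by (simp add: nP_pol_def P_pol_def uu_def smult_diff_right)

lemma Q_val: "a \<in> Amon n \<Longrightarrow> poly (smult (uu n) (M_pol \<iota> n f)) (E a) = F a"
  using uu_Pinz[of n] by (simp add: poly_M mult.left_commute)

lemma Q_deg: "degree (smult (uu n) (M_pol \<iota> n f)) < card (UNIV::'k set) ^ n"
  using degree_smult_le[of "uu n" "M_pol \<iota> n f"] deg_M[of n] qq_pos[of n] by linarith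

lemma nP_deg: "degree (nP_pol \<iota> n f) < card (UNIV::'k set) ^ n"
  unfolding nP_eq
  by (rule le_less_trans[OF degree_diff_le_max]) (use Q_deg[of n] qq_pos[of n] in auto)

lemma nP_val: assumes b: "b \<in> Adeg n" shows "poly (nP_pol \<iota> n f) (E b) = F b"
proof -
  let ?Q = "smult (uu n) (M_pol \<iota> n f)"
  let ?p1 = "?Q \<circ>\<^sub>p [:E b, 1:]" and ?p2 = "?Q + [:F b:]"
  have "?p1 = ?p2"
  proof (rule poly_eqI_degree[where A = "E ` Amon n"])
    fix z assume "z \<in> E ` Amon n"
    then obtain m where m: "m \<in> Amon n" "z = E m" by auto
    have mb: "m + b \<in> Amon n" by (rule Amon_add[OF m(1) b])
    have "poly ?p1 z = poly ?Q (E (m + b))" using m by (simp add: poly_pcompose E_add add.commute)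
    also have "\<dots> = F m + F b" using Q_val[OF mb] by (simp add: F_add)
    finally show "poly ?p1 z = poly ?p2 z" using Q_val[OF m(1)] m by simp
  next
    show "degree ?p1 < card (E ` Amon n)"
      using Q_deg[of n] by (simp add: degree_pcompose card_EM)
    show "degree ?p2 < card (E ` Amon n)"
      by (rule le_less_trans[OF degree_add_le_max]) (use Q_deg[of n] qq_pos[of n] in \<open>auto simp: card_EM\<close>)
  qed
  hence "poly ?p1 0 = poly ?p2 0" by simp
  hence "poly ?Q (E b) = poly ?Q 0 + F b" by (simp add: poly_pcompose)
  thus ?thesis unfolding nP_eq by simp
qed

lemma step:
  assumes ih: "\<forall>b\<in>Adeg n. poly (R c n) (E b) = F b"
  defines "X \<equiv> monom 1 n"
  defines "\<kappa> \<equiv> (F X - poly (R c n) (E X)) / poly (e_pol \<iota> n) (E X)"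
  shows "\<forall>b\<in>Adeg (Suc n). poly (R (c(n := \<kappa>)) (Suc n)) (E b) = F b"
proof
  have RS: "R (c(n := \<kappa>)) (Suc n) = R c n + smult \<kappa> (e_pol \<iota> n)"
    unfolding R_Suc by (simp add: R_cong[of n "c(n := \<kappa>)" c])
  have enz: "poly (e_pol \<iota> n) (E X) \<noteq> 0" unfolding X_def by (rule e_nonroot[OF monom_notin_Adeg])
  have key: "poly (R c n) (E X) + \<kappa> * poly (e_pol \<iota> n) (E X) = F X"
    using enz by (simp add: \<kappa>_def)
  fix a :: "'k poly" assume a: "a \<in> Adeg (Suc n)"
  define g :: 'k where "g = coeff a n"
  define b where "b = a - smult g X"
  have b: "b \<in> Adeg n" unfolding b_def g_def X_def by (rule Adeg_decomp[OF a])
  have ab: "a = [:g:] * X + b" by (simp add: b_def)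
  have Ea: "E a = E [:g:] * E X + E b" by (subst ab, simp only: E_add E_mult)
  have "poly (R (c(n := \<kappa>)) (Suc n)) (E a)
        = (E [:g:] * poly (R c n) (E X) + F b) + \<kappa> * (E [:g:] * poly (e_pol \<iota> n) (E X))"
    unfolding RS Ea using ih b by (simp add: R_add R_hom e_add e_hom e_root)
  also have "\<dots> = E [:g:] * (poly (R c n) (E X) + \<kappa> * poly (e_pol \<iota> n) (E X)) + F b"
    by (simp add: algebra_simps)
  also have "\<dots> = E [:g:] * F X + F b" by (simp only: key)
  also have "\<dots> = F a" by (simp add: ab F_add F_smult[symmetric])
  finally show "poly (R (c(n := \<kappa>)) (Suc n)) (E a) = F a" .
qed

lemma exist: "\<exists>c. (\<forall>j\<ge>n. c j = 0) \<and> (\<forall>b\<in>Adeg n. poly (R c n) (E b) = F b)"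
proof (induction n)
  case 0
  have "Adeg 0 = {0::'k poly}" by (auto simp: Adeg_def)
  thus ?case by (intro exI[of _ "\<lambda>_. 0"]) (simp add: R_def E_zero F_zero)
next
  case (Suc n)
  then obtain c where c: "\<forall>j\<ge>n. c j = 0" "\<forall>b\<in>Adeg n. poly (R c n) (E b) = F b" by blast
  define \<kappa> where "\<kappa> = (F (monom 1 n) - poly (R c n) (E (monom 1 n))) / poly (e_pol \<iota> n) (E (monom 1 n))"
  have "\<forall>b\<in>Adeg (Suc n). poly (R (c(n := \<kappa>)) (Suc n)) (E b) = F b"
    unfolding \<kappa>_def by (rule step[OF c(2)])
  moreover have "\<forall>j\<ge>Suc n. (c(n := \<kappa>)) j = 0" using c(1) by simp
  ultimately show ?case by blast
qed

lemma nP_R: assumes "\<forall>b\<in>Adeg n. poly (R c n) (E b) = F b" shows "nP_pol \<iota> n f = R c n"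
proof (rule poly_eqI_degree[where A = "E ` Adeg n"])
  fix z assume "z \<in> E ` Adeg n"
  then obtain b where "b \<in> Adeg n" "z = E b" by auto
  thus "poly (nP_pol \<iota> n f) z = poly (R c n) z" using assms nP_val by simp
qed (use nP_deg[of n] R_deg[of c n] in \<open>simp_all add: card_EA\<close>)

lemma main: "nP_pol \<iota> (d + 1) f - smult (alpha \<iota> (d + 1) d f) (e_pol \<iota> d) = nP_pol \<iota> d f"
proof -
  obtain c where c: "\<forall>j\<ge>d. c j = 0" "\<forall>b\<in>Adeg d. poly (R c d) (E b) = F b" using exist by blast
  define \<kappa> where "\<kappa> = (F (monom 1 d) - poly (R c d) (E (monom 1 d))) / poly (e_pol \<iota> d) (E (monom 1 d))"
  define c' where "c' = c(d := \<kappa>)"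
  have ci': "\<forall>b\<in>Adeg (Suc d). poly (R c' (Suc d)) (E b) = F b"
    unfolding c'_def \<kappa>_def by (rule step[OF c(2)])
  have h1: "nP_pol \<iota> d f = R c d" by (rule nP_R[OF c(2)])
  have h2: "nP_pol \<iota> (Suc d) f = R c' (Suc d)" by (rule nP_R[OF ci'])
  have h3: "R c' (Suc d) = R c d + smult \<kappa> (e_pol \<iota> d)"
    unfolding R_Suc c'_def by (simp add: R_cong[of d "c(d := \<kappa>)" c])
  have c'0: "\<forall>j. d + 1 \<le> j \<longrightarrow> c' j = 0" using c(1) by (simp add: c'_def)
  have th: "(THE c. (\<forall>j. d + 1 \<le> j \<longrightarrow> c j = 0) \<and>
      nP_pol \<iota> (d + 1) f = (\<Sum>j<d + 1. smult (c j) (e_pol \<iota> j))) = c'"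
  proof (rule the_equality)
    show "(\<forall>j. d + 1 \<le> j \<longrightarrow> c' j = 0) \<and> nP_pol \<iota> (d + 1) f = (\<Sum>j<d + 1. smult (c' j) (e_pol \<iota> j))"
      using c'0 h2 by (simp add: R_def)
  next
    fix c'' assume h: "(\<forall>j. d + 1 \<le> j \<longrightarrow> c'' j = 0) \<and> nP_pol \<iota> (d + 1) f = (\<Sum>j<d + 1. smult (c'' j) (e_pol \<iota> j))"
    hence "R c'' (Suc d) = R c' (Suc d)" using h2 by (simp add: R_def)
    hence lo: "\<And>j. j < Suc d \<Longrightarrow> c'' j = c' j" by (rule R_unique)
    show "c'' = c'"
    proof
      fix j show "c'' j = c' j"
        using lo[of j] h c'0 by (cases "j < Suc d") auto
    qed
  qed
  have "alpha \<iota> (d + 1) d f = \<kappa>" unfolding alpha_def th by (simp add: c'_def)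
  thus ?thesis using h1 h2 h3 by simp
qed

end


theorem lemma4p2p4:
  fixes \<iota> :: "'k::{field_gcd,finite} poly \<Rightarrow> 'b::idom"
    and f :: "'k poly \<Rightarrow> 'b" and d :: nat
  assumes hom_add: "\<And>a b. \<iota> (a + b) = \<iota> a + \<iota> b"
    and hom_mult: "\<And>a b. \<iota> (a * b) = \<iota> a * \<iota> b"
    and hom_one: "\<iota> 1 = 1"
    and inj: "inj \<iota>"
    and f_add: "\<And>a b. f (a + b) = f a + f b"
    and f_smult: "\<And>c a. f (smult c a) = \<iota> [:c:] * f a"
    and d: "d \<ge> 1"
  shows "nP_pol \<iota> (d + 1) f - smult (alpha \<iota> (d + 1) d f) (e_pol \<iota> d) = nP_pol \<iota> d f"
proof -
  interpret lsetup \<iota> f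
    by unfold_locales (use hom_add hom_mult hom_one inj f_add f_smult in auto)
  show ?thesis by (rule main)
qed

end
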